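(* Let $T$ be a table over schema $U$ with $|T|=n$ and $|U|=m$, let $k,l$ be dimensions with $l\le m$, and let $\mathcal{R}$ be a set of association rules over $T$. Consider the following algorithm. For every subset $U'\subseteq U$ with $|U'|=l$, let $T'$ be the projection of $T$ onto $U'$, and run greedy row selection on $T'$: starting from the empty sub-table, repeat $k$ times: among all tuples of $T'$ not yet selected, add to the current sub-table one whose addition yields the largest cell coverage $\mathrm{cellCov}_{\mathcal{R}}(T,\cdot)$. Among the resulting sub-tables (one per choice of $U'$), output one with the maximal cell coverage. Then the output is a $k\times l$ sub-table $T_{sub}$ of $T$ satisfying $\mathrm{cellCov}_{\mathcal{R}}(T,T_{sub})\geq(1-\frac{1}{e})\,\mathrm{OPT}$, where $\mathrm{OPT}$ is the maximum of $\mathrm{cellCov}_{\mathcal{R}}(T,S)$ over all $k\times l$ sub-tables $S$ of $T$ (the optimal value of the Max-Cell-Cover problem).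
   Context: A schema $U=\{u_1,\dots,u_{|U|}\}$ is a finite set of columns; each column $u_i$ has a domain $\mathcal{D}_i$ of allowed values. A table $T$ over $U$ is a finite set of tuples $t$, each assigning a value $t(u_i)\in\mathcal{D}_i$ to every column $u_i$; the pair $\langle t,u\rangle$ is a cell. A sub-table $T_{sub}$ of $T$ is a table over some schema $U_{sub}\subseteq U$ such that each tuple of $T_{sub}$ is the projection of some tuple of $T$ onto $U_{sub}$; it is of size $k\times l$ if it has $k$ tuples and $|U_{sub}|=l$. An association rule $R$ has the form $\{(u_1,v_1),\dots,(u_{r},v_{r})\}\rightarrow\{(u_{r+1},v_{r+1}),\dots,(u_{r+p},v_{r+p})\}$ with $u_i\in U$ and $v_i\in\mathcal{D}_i$; $U_R=\{u_1,\dots,u_{r+p}\}$ is its set of columns. $R$ holds for a tuple $t$ if $t(u_i)=v_i$ for all $1\le i\le r+p$; $T_R$ is the set of tuples of $T$ for which $R$ holds. A rule $R\in\mathcal{R}$ is covered by $T_{sub}$ if $U_R\subseteq U_{sub}$ and $R$ holds for some tuple of $T_{sub}$; let $\mathcal{R}_{sub}$ be the set of covered rules. Let $\mathrm{cell}(R,T)=\{\langle t,u\rangle : t\in T_R,\ u\in U_R\}$. The cell coverage is $\mathrm{cellCov}_{\mathcal{R}}(T,T_{sub})=\frac{1}{\mathrm{upcov}}\left|\bigcup_{R\in\mathcal{R}_{sub}}\mathrm{cell}(R,T)\right|$, where $\mathrm{upcov}=\left|\bigcup_{R\in\mathcal{R}}\mathrm{cell}(R,T)\right|$. Max-Cell-Cover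 is the problem of finding a $k\times l$ sub-table of $T$ with maximal cell coverage. *)

theory Defs
  imports Complex_Main
begin

text \<open>Tuples are partial maps from columns to values (defined exactly on the schema).
  An association rule is a pair (antecedent, consequent) of sets of (column, value) pairs.\<close>

type_synonym ('c,'v) tuple = "'c \<Rightarrow> 'v option"
type_synonym ('c,'v) rule = "('c \<times> 'v) set \<times> ('c \<times> 'v) set"

definition well_formed_table ::
  "'c set \<Rightarrow> ('c \<Rightarrow> 'v set) \<Rightarrow> ('c,'v) tuple set \<Rightarrow> bool" where
  "well_formed_table U D T \<longleftrightarrow> finite U \<and> finite T \<and>
     (\<forall>t\<in>T. dom t = U \<and> (\<forall>u\<in>U. the (t u) \<in> D u))"

definition rule_cols :: "('c,'v) rule \<Rightarrow> 'c set" where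
  "rule_cols R = fst ` (fst R \<union> snd R)"

definition well_formed_rule ::
  "'c set \<Rightarrow> ('c \<Rightarrow> 'v set) \<Rightarrow> ('c,'v) rule \<Rightarrow> bool" where
  "well_formed_rule U D R \<longleftrightarrow> finite (fst R) \<and> finite (snd R) \<and>
     (\<forall>(u,v)\<in>fst R \<union> snd R. u \<in> U \<and> v \<in> D u)"

definition rule_holds :: "('c,'v) rule \<Rightarrow> ('c,'v) tuple \<Rightarrow> bool" where
  "rule_holds R t \<longleftrightarrow> (\<forall>(u,v)\<in>fst R \<union> snd R. t u = Some v)"

definition proj :: "'c set \<Rightarrow> ('c,'v) tuple \<Rightarrow> ('c,'v) tuple" where
  "proj Us t = t |` Us"

definition is_subtable ::
  "'c set \<Rightarrow> ('c,'v) tuple set \<Rightarrow> ('c,'v) tuple set \<Rightarrow> 'c set \<Rightarrow> bool" where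
  "is_subtable U T S Us \<longleftrightarrow> Us \<subseteq> U \<and> S \<subseteq> proj Us ` T"

definition is_subtable_of_size ::
  "'c set \<Rightarrow> ('c,'v) tuple set \<Rightarrow> nat \<Rightarrow> nat \<Rightarrow> ('c,'v) tuple set \<Rightarrow> 'c set \<Rightarrow> bool" where
  "is_subtable_of_size U T k l S Us \<longleftrightarrow> is_subtable U T S Us \<and> card S = k \<and> card Us = l"

definition rule_covered :: "('c,'v) rule \<Rightarrow> ('c,'v) tuple set \<Rightarrow> 'c set \<Rightarrow> bool" where
  "rule_covered R S Us \<longleftrightarrow> rule_cols R \<subseteq> Us \<and> (\<exists>t\<in>S. rule_holds R t)"

definition cells :: "('c,'v) rule \<Rightarrow> ('c,'v) tuple set \<Rightarrow> (('c,'v) tuple \<times> 'c) set" where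
  "cells R T = {(t,u). t \<in> T \<and> rule_holds R t \<and> u \<in> rule_cols R}"

definition upcov :: "('c,'v) rule set \<Rightarrow> ('c,'v) tuple set \<Rightarrow> nat" where
  "upcov Rs T = card (\<Union>R\<in>Rs. cells R T)"

definition cellCov ::
  "('c,'v) rule set \<Rightarrow> ('c,'v) tuple set \<Rightarrow> ('c,'v) tuple set \<Rightarrow> 'c set \<Rightarrow> real" where
  "cellCov Rs T S Us =
     real (card (\<Union>R\<in>{R\<in>Rs. rule_covered R S Us}. cells R T)) / real (upcov Rs T)"

definition opt_cell_cover ::
  "'c set \<Rightarrow> ('c,'v) rule set \<Rightarrow> ('c,'v) tuple set \<Rightarrow> nat \<Rightarrow> nat \<Rightarrow> real" where
  "opt_cell_cover U Rs T k l =
     Max {cellCov Rs T S Us | S Us. is_subtable_of_size U T k l S Us}"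

text \<open>S is a possible result (for any tie-breaking) of greedy row selection with k
  steps on the projection of T onto Us.\<close>
definition greedy_result ::
  "('c,'v) rule set \<Rightarrow> ('c,'v) tuple set \<Rightarrow> 'c set \<Rightarrow> nat \<Rightarrow> ('c,'v) tuple set \<Rightarrow> bool" where
  "greedy_result Rs T Us k S \<longleftrightarrow>
     (\<exists>f :: nat \<Rightarrow> ('c,'v) tuple set.
        f 0 = {} \<and>
        (\<forall>i<k. \<exists>t\<in>proj Us ` T - f i.
            f (Suc i) = insert t (f i) \<and>
            (\<forall>t'\<in>proj Us ` T - f i.
               cellCov Rs T (insert t' (f i)) Us \<le> cellCov Rs T (insert t (f i)) Us)) \<and>
        S = f k)"

end

theory Submission
  imports Defs
begin

lemma cov_gain:
  fixes A :: "'a \<Rightarrow> 'b set" and F :: "'a set \<Rightarrow> real"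
  assumes W: "finite W" "\<And>t. A t \<subseteq> W" and c: "c \<ge> 0"
    and F: "\<And>S. F S = real (card (\<Union> (A ` S))) / c"
    and fin: "finite Sopt"
  shows "F Sopt \<le> F X + (\<Sum>s\<in>Sopt - X. F (insert s X) - F X)"
proof -
  define UX where "UX = \<Union>(A ` X)"
  have finA: "\<And>S. finite (\<Union>(A ` S))" using W by (meson UN_least finite_subset)
  have fUX: "finite UX" unfolding UX_def by (rule finA)
  have sub: "\<Union>(A ` Sopt) \<subseteq> UX \<union> (\<Union>s\<in>Sopt - X. A s - UX)" unfolding UX_def by blast
  have "card (\<Union>(A ` Sopt)) \<le> card (UX \<union> (\<Union>s\<in>Sopt - X. A s - UX))"
  proof (rule card_mono[OF _ sub])
    show "finite (UX \<union> (\<Union>s\<in>Sopt - X. A s - UX))"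
      by (rule finite_subset[OF _ W(1)]) (use W(2) in \<open>auto simp: UX_def\<close>)
  qed
  also have "\<dots> \<le> card UX + card (\<Union>s\<in>Sopt - X. A s - UX)" by (rule card_Un_le)
  also have "card (\<Union>s\<in>Sopt - X. A s - UX) \<le> (\<Sum>s\<in>Sopt - X. card (A s - UX))"
    by (rule card_UN_le) (use fin in auto)
  finally have N: "card (\<Union>(A ` Sopt)) \<le> card UX + (\<Sum>s\<in>Sopt - X. card (A s - UX))" by simp
  have ins: "card (\<Union>(A ` insert s X)) = card UX + card (A s - UX)" for s
  proof -
    have "\<Union>(A ` insert s X) = UX \<union> (A s - UX)" unfolding UX_def by blast
    moreover have "finite (A s - UX)" using W by (meson Diff_subset finite_subset)
    then have "card (UX \<union> (A s - UX)) = card UX + card (A s - UX)"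
      by (intro card_Un_disjoint) (use fUX in auto)
    ultimately show ?thesis by simp
  qed
  have "real (card (\<Union>(A ` Sopt))) \<le> real (card UX) + (\<Sum>s\<in>Sopt - X. real (card (A s - UX)))"
    using N by (metis of_nat_add of_nat_mono of_nat_sum)
  hence "real (card (\<Union>(A ` Sopt))) / c \<le> (real (card UX) + (\<Sum>s\<in>Sopt - X. real (card (A s - UX)))) / c"
    using c by (rule divide_right_mono)
  also have "\<dots> = real (card UX) / c + (\<Sum>s\<in>Sopt - X. real (card (A s - UX)) / c)"
    by (simp add: add_divide_distrib sum_divide_distrib)
  also have "\<dots> = F X + (\<Sum>s\<in>Sopt - X. F (insert s X) - F X)"
  proof -
    have g: "F (insert s X) - F X = real (card (A s - UX)) / c" for s
      by (simp only: F ins UX_def[symmetric]) (simp add: add_divide_distrib)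
    show ?thesis unfolding g by (simp add: F UX_def)
  qed
  finally show ?thesis using F by simp
qed

lemma cov_mono:
  fixes A :: "'a \<Rightarrow> 'b set" and F :: "'a set \<Rightarrow> real"
  assumes W: "finite W" "\<And>t. A t \<subseteq> W" and c: "c \<ge> 0"
    and F: "\<And>S. F S = real (card (\<Union> (A ` S))) / c"
  shows "F X \<le> F (insert t X)"
proof -
  have finA: "\<And>S. finite (\<Union>(A ` S))" using W by (meson UN_least finite_subset)
  have "card (\<Union>(A ` X)) \<le> card (\<Union>(A ` insert t X))"
    by (rule card_mono[OF finA]) blast
  thus ?thesis using c by (simp add: F divide_right_mono)
qed

lemma greedy_bound:
  fixes A :: "'a \<Rightarrow> 'b set" and F :: "'a set \<Rightarrow> real"
  assumes W: "finite W" "\<And>t. A t \<subseteq> W" and c: "c \<ge> 0"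
    and F: "\<And>S. F S = real (card (\<Union> (A ` S))) / c"
    and f0: "f 0 = {}"
    and fs: "\<forall>i<k. \<exists>t\<in>V - f i. f (Suc i) = insert t (f i) \<and>
               (\<forall>t'\<in>V - f i. F (insert t' (f i)) \<le> F (insert t (f i)))"
    and Sopt: "Sopt \<subseteq> V" "finite Sopt" "card Sopt = k"
  shows "F (f k) \<ge> (1 - 1 / exp 1) * F Sopt"
proof (cases "k = 0")
  case True
  then have "Sopt = {}" using Sopt by simp
  then show ?thesis using True f0 by (simp add: F)
next
  case False
  then have kpos: "real k > 0" by simp
  define a where "a i = F Sopt - F (f i)" for i
  have step: "a (Suc i) \<le> (1 - 1 / real k) * a i" if "i < k" for i
  proof -
    obtain t where t: "t \<in> V - f i" "f (Suc i) = insert t (f i)"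
      "\<forall>t'\<in>V - f i. F (insert t' (f i)) \<le> F (insert t (f i))"
      using fs \<open>i < k\<close> by blast
    define d where "d = F (f (Suc i)) - F (f i)"
    have d0: "d \<ge> 0" unfolding d_def t(2) using cov_mono[OF W c F] by simp
    have "F Sopt \<le> F (f i) + (\<Sum>s\<in>Sopt - f i. F (insert s (f i)) - F (f i))"
      by (rule cov_gain[OF W c F Sopt(2)])
    also have "(\<Sum>s\<in>Sopt - f i. F (insert s (f i)) - F (f i)) \<le> (\<Sum>s\<in>Sopt - f i. d)"
      by (rule sum_mono) (use t Sopt(1) in \<open>auto simp: d_def\<close>)
    also have "(\<Sum>s\<in>Sopt - f i. d) = real (card (Sopt - f i)) * d" by simp
    also have "\<dots> \<le> real k * d"
      using d0 Sopt by (intro mult_right_mono) (auto intro: card_mono)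
    finally have "F Sopt \<le> F (f i) + real k * d" by simp
    hence "a i \<le> real k * (a i - a (Suc i))" by (simp add: a_def d_def algebra_simps)
    hence "real k * a (Suc i) \<le> (real k - 1) * a i" by (simp add: algebra_simps)
    hence "a (Suc i) \<le> (real k - 1) * a i / real k" using kpos by (simp add: field_simps)
    thus ?thesis using kpos by (simp add: field_simps)
  qed
  have q0: "0 \<le> 1 - 1 / real k" using False by (simp add: field_simps)
  have ind: "i \<le> k \<Longrightarrow> a i \<le> (1 - 1 / real k) ^ i * a 0" for i
  proof (induction i)
    case 0 then show ?case by simp
  next
    case (Suc i)
    have "a (Suc i) \<le> (1 - 1 / real k) * a i" using step Suc by simp
    also have "\<dots> \<le> (1 - 1 / real k) * ((1 - 1 / real k) ^ i * a 0)"
      using Suc q0 by (intro mult_left_mono) auto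
    finally show ?case by simp
  qed
  have a0: "a 0 = F Sopt" by (simp add: a_def f0 F)
  have Fpos: "F Sopt \<ge> 0" using c by (simp add: F)
  have "(1 - 1 / real k) \<le> exp (- 1 / real k)" using exp_ge_add_one_self[of "- 1 / real k"] by simp
  hence "(1 - 1 / real k) ^ k \<le> exp (- 1 / real k) ^ k" using q0 by (intro power_mono) auto
  also have "\<dots> = exp (real k * (- 1 / real k))" by (rule exp_of_nat_mult[symmetric])
  also have "\<dots> = 1 / exp 1" using kpos by (simp add: exp_minus inverse_eq_divide)
  finally have pk: "(1 - 1 / real k) ^ k \<le> 1 / exp 1" .
  have "a k \<le> (1 - 1 / real k) ^ k * F Sopt" using ind[of k] a0 by simp
  also have "\<dots> \<le> 1 / exp 1 * F Sopt" using pk Fpos by (rule mult_right_mono)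
  finally show ?thesis by (simp add: a_def algebra_simps)
qed


lemma greedy_props:
  assumes "f 0 = {}" "\<forall>i<k. \<exists>t\<in>V - f i. f (Suc i) = insert t (f i) \<and> P i t"
  shows "i \<le> k \<Longrightarrow> f i \<subseteq> V \<and> finite (f i) \<and> card (f i) = i"
proof (induction i)
  case 0 then show ?case using assms by simp
next
  case (Suc i)
  have "i < k" using Suc by simp
  then obtain t where "t \<in> V - f i" "f (Suc i) = insert t (f i)" using assms(2) by blast
  then show ?case using Suc by auto
qed

lemma ex_argmax:
  fixes h :: "'a \<Rightarrow> real"
  assumes "finite X" "X \<noteq> {}"
  shows "\<exists>t\<in>X. \<forall>t'\<in>X. h t' \<le> h t"
proof -
  have "Max (h ` X) \<in> h ` X" using assms by simp
  then obtain t where "t \<in> X" "h t = Max (h ` X)" by auto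
  then show ?thesis using assms by (metis Max_ge finite_imageI imageI)
qed

lemma greedy_exists:
  fixes F :: "'a set \<Rightarrow> real"
  assumes V: "finite V" "k \<le> card V"
  shows "\<exists>f. f 0 = {} \<and> (\<forall>i<k. \<exists>t\<in>V - f i. f (Suc i) = insert t (f i) \<and>
            (\<forall>t'\<in>V - f i. F (insert t' (f i)) \<le> F (insert t (f i))))"
proof -
  define pick where "pick X = (SOME t. t \<in> V - X \<and> (\<forall>t'\<in>V - X. F (insert t' X) \<le> F (insert t X)))" for X
  have pick: "pick X \<in> V - X \<and> (\<forall>t'\<in>V - X. F (insert t' X) \<le> F (insert (pick X) X))"
    if "V - X \<noteq> {}" for X
  proof -
    have "\<exists>t\<in>V - X. \<forall>t'\<in>V - X. F (insert t' X) \<le> F (insert t X)"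
      by (rule ex_argmax) (use V that in auto)
    then show ?thesis unfolding pick_def by (rule someI2_bex) auto
  qed
  define f where "f n = ((\<lambda>X. insert (pick X) X) ^^ n) {}" for n
  have fS: "f (Suc i) = insert (pick (f i)) (f i)" for i by (simp add: f_def)
  have inv: "i \<le> k \<Longrightarrow> f i \<subseteq> V \<and> finite (f i) \<and> card (f i) = i" for i
  proof (induction i)
    case 0 then show ?case by (simp add: f_def)
  next
    case (Suc i)
    then have IH: "f i \<subseteq> V" "finite (f i)" "card (f i) = i" by auto
    have "V - f i \<noteq> {}"
    proof
      assume "V - f i = {}"
      then have "card V \<le> card (f i)" using IH by (intro card_mono) auto
      then show False using Suc IH V by simp
    qed
    then show ?case using pick[of "f i"] IH fS[of i] by auto
  qed
  have "\<forall>i<k. \<exists>t\<in>V - f i. f (Suc i) = insert t (f i) \<and>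
            (\<forall>t'\<in>V - f i. F (insert t' (f i)) \<le> F (insert t (f i)))"
  proof (intro allI impI)
    fix i assume "i < k"
    then have IH: "f i \<subseteq> V" "finite (f i)" "card (f i) = i" using inv by auto
    have "V - f i \<noteq> {}"
    proof
      assume "V - f i = {}"
      then have "card V \<le> card (f i)" using IH by (intro card_mono) auto
      then show False using \<open>i < k\<close> IH V by simp
    qed
    then show "\<exists>t\<in>V - f i. f (Suc i) = insert t (f i) \<and>
            (\<forall>t'\<in>V - f i. F (insert t' (f i)) \<le> F (insert t (f i)))"
      using pick[of "f i"] fS[of i] by blast
  qed
  moreover have "f 0 = {}" by (simp add: f_def)
  ultimately show ?thesis by blast
qed

theorem proposition4p3:
  fixes U :: "'c set" and D :: "'c \<Rightarrow> 'v set" and T :: "('c,'v) tuple set"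
    and Rs :: "('c,'v) rule set" and k l :: nat
    and g :: "'c set \<Rightarrow> ('c,'v) tuple set" and Ustar :: "'c set"
  assumes wfT: "well_formed_table U D T"
    and wfR: "\<forall>R\<in>Rs. well_formed_rule U D R"
    and l_le: "l \<le> card U"
    and g_greedy: "\<forall>U'. U' \<subseteq> U \<and> card U' = l \<and> (\<exists>S. greedy_result Rs T U' k S)
                      \<longrightarrow> greedy_result Rs T U' k (g U')"
    and Ustar_cand: "Ustar \<subseteq> U" "card Ustar = l" "\<exists>S. greedy_result Rs T Ustar k S"
    and Ustar_best: "\<forall>U'. U' \<subseteq> U \<and> card U' = l \<and> (\<exists>S. greedy_result Rs T U' k S)
                      \<longrightarrow> cellCov Rs T (g U') U' \<le> cellCov Rs T (g Ustar) Ustar"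
  shows "is_subtable_of_size U T k l (g Ustar) Ustar \<and>
         cellCov Rs T (g Ustar) Ustar \<ge> (1 - 1 / exp 1) * opt_cell_cover U Rs T k l"
proof -
  have finU: "finite U" and finT: "finite T" using wfT unfolding well_formed_table_def by auto
  define W where "W = T \<times> U"
  have finW: "finite W" unfolding W_def using finU finT by simp
  have cellsW: "cells R T \<subseteq> W" if "R \<in> Rs" for R
    using wfR that unfolding cells_def W_def rule_cols_def well_formed_rule_def by fastforce
  define A where "A Us t = (\<Union>R\<in>{R\<in>Rs. rule_cols R \<subseteq> Us \<and> rule_holds R t}. cells R T)" for Us t
  have AW: "A Us t \<subseteq> W" for Us t unfolding A_def using cellsW by blast
  have Feq: "cellCov Rs T S Us = real (card (\<Union>(A Us ` S))) / real (upcov Rs T)" for S Us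
  proof -
    have "(\<Union>R\<in>{R\<in>Rs. rule_covered R S Us}. cells R T) = \<Union>(A Us ` S)"
      unfolding A_def rule_covered_def by blast
    then show ?thesis unfolding cellCov_def by simp
  qed
  have c0: "real (upcov Rs T) \<ge> 0" by simp
  have gStar: "greedy_result Rs T Ustar k (g Ustar)" using g_greedy Ustar_cand by blast
  then obtain f where f: "f 0 = {}" "\<forall>i<k. \<exists>t\<in>proj Ustar ` T - f i.
            f (Suc i) = insert t (f i) \<and>
            (\<forall>t'\<in>proj Ustar ` T - f i.
               cellCov Rs T (insert t' (f i)) Ustar \<le> cellCov Rs T (insert t (f i)) Ustar)"
     "g Ustar = f k" unfolding greedy_result_def by blast
  have "f k \<subseteq> proj Ustar ` T \<and> finite (f k) \<and> card (f k) = k"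
    by (rule greedy_props[OF f(1) f(2)]) simp
  then have sizeStar: "is_subtable_of_size U T k l (g Ustar) Ustar"
    unfolding is_subtable_of_size_def is_subtable_def using f(3) Ustar_cand by simp
  define P where "P = {cellCov Rs T S Us | S Us. is_subtable_of_size U T k l S Us}"
  define Y where "Y = (\<Union>Us\<in>Pow U. proj Us ` T)"
  have finY: "finite Y" unfolding Y_def using finU finT by simp
  have "P \<subseteq> (\<lambda>(S,Us). cellCov Rs T S Us) ` (Pow Y \<times> Pow U)"
    unfolding P_def Y_def is_subtable_of_size_def is_subtable_def by force
  then have finP: "finite P" using finY finU by (meson finite_Pow_iff finite_SigmaI finite_imageI finite_subset)
  have "P \<noteq> {}" unfolding P_def using sizeStar by blast
  then have "Max P \<in> P" using finP by simp
  then obtain Sopt Uopt where opt: "is_subtable_of_size U T k l Sopt Uopt"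
    "opt_cell_cover U Rs T k l = cellCov Rs T Sopt Uopt"
    unfolding P_def opt_cell_cover_def by auto
  then have Uo: "Uopt \<subseteq> U" "card Uopt = l" "Sopt \<subseteq> proj Uopt ` T" "card Sopt = k"
    unfolding is_subtable_of_size_def is_subtable_def by auto
  have finV: "finite (proj Uopt ` T)" using finT by simp
  have finSo: "finite Sopt" using Uo(3) finV finite_subset by blast
  have kle: "k \<le> card (proj Uopt ` T)" using Uo(3,4) finV card_mono by blast
  obtain f0 where "f0 0 = {} \<and> (\<forall>i<k. \<exists>t\<in>proj Uopt ` T - f0 i. f0 (Suc i) = insert t (f0 i) \<and>
            (\<forall>t'\<in>proj Uopt ` T - f0 i. cellCov Rs T (insert t' (f0 i)) Uopt \<le> cellCov Rs T (insert t (f0 i)) Uopt))"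
    using greedy_exists[OF finV kle, of "\<lambda>S. cellCov Rs T S Uopt"] by blast
  then have exS: "\<exists>S. greedy_result Rs T Uopt k S" unfolding greedy_result_def by blast
  have "greedy_result Rs T Uopt k (g Uopt)" using g_greedy Uo exS by blast
  then obtain h where h: "h 0 = {}" "\<forall>i<k. \<exists>t\<in>proj Uopt ` T - h i.
            h (Suc i) = insert t (h i) \<and>
            (\<forall>t'\<in>proj Uopt ` T - h i.
               cellCov Rs T (insert t' (h i)) Uopt \<le> cellCov Rs T (insert t (h i)) Uopt)"
     "g Uopt = h k" unfolding greedy_result_def by blast
  have "(1 - 1 / exp 1) * cellCov Rs T Sopt Uopt \<le> cellCov Rs T (h k) Uopt"
    by (rule greedy_bound[OF finW AW c0 Feq h(1) h(2) Uo(3) finSo Uo(4)])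
  also have "\<dots> \<le> cellCov Rs T (g Ustar) Ustar" using Ustar_best Uo exS h(3) by metis
  finally show ?thesis using sizeStar opt(2) by simp
qed

end
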